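(* Let $\lambda>1$, $b>0$, $a\in\mathbb{R}$ and consider $$x_{n+1}=x_{n-1}^{\lambda}e^{a-bx_n-x_{n-1}},\qquad n\ge1,$$ with non-negative initial values $x_0,x_1$. (a) Every non-negative solution converges to $0$ if and only if $a<(\lambda-1)[1-\ln(\lambda-1)]$. (b) If $(\lambda-1)[1-\ln(\lambda-1)]<a<(\lambda-1)[1-\ln(\lambda-1)+\ln(b+1)]$, then the equation has no positive fixed points, but it has solutions with all terms positive that do not converge to $0$. (c) Assume $b\le\frac{\lambda-1}{\lambda}e^{1/(\lambda-1)}-1$ and $(\lambda-1)[1-\ln(\lambda-1)+\ln(b+1)]\le a\le\lambda-(\lambda-1)\ln\lambda$, and let $x^*$ be the smallest positive fixed point of the equation (i.e. the smallest positive solution of $x=x^\lambda e^{a-(b+1)x}$). Then there are initial values $x_0,x_1\in(0,x^* )$ whose solution is positive and does not converge to $0$. (d) Under the hypotheses of (c), for every initial pair $(x_0,x_1)\in([x^*,\lambda]\times[0,x^*])\cup([0,x^*]\times[x^*,\lambda])$ the corresponding solution does not converge to $0$.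
   Context: A fixed point of the equation is a positive number $x$ with $x=x^{\lambda}e^{a-(b+1)x}$. *)

theory Defs
  imports Complex_Main
begin

fun sol :: "real \<Rightarrow> real \<Rightarrow> real \<Rightarrow> real \<Rightarrow> real \<Rightarrow> nat \<Rightarrow> real" where
  "sol lam a b x0 x1 0 = x0"
| "sol lam a b x0 x1 (Suc 0) = x1"
| "sol lam a b x0 x1 (Suc (Suc n)) =
     (sol lam a b x0 x1 n) powr lam * exp (a - b * sol lam a b x0 x1 (Suc n) - sol lam a b x0 x1 n)"

definition fixed_pt :: "real \<Rightarrow> real \<Rightarrow> real \<Rightarrow> real \<Rightarrow> bool" where
  "fixed_pt lam a b x \<longleftrightarrow> x > 0 \<and> x = x powr lam * exp (a - (b + 1) * x)"

end

theory Submission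
  imports Defs
begin

lemma pe: "0 < (x::real) \<Longrightarrow> x powr l * exp t = exp (l * ln x + t)"
  by (simp add: powr_def exp_add del: exp_le_cancel_iff)

lemma I1:
  fixes l x c :: real
  assumes "l > 1" "0 \<le> x"
  shows "x powr l * exp (c - x) \<le> l powr l * exp (c - l)"
proof (cases "x = 0")
  case True thus ?thesis by simp
next
  case False
  hence xp: "x > 0" using assms by simp
  have "ln (x / l) \<le> x / l - 1" using xp assms by (intro ln_le_minus_one) simp
  hence "ln x - ln l \<le> x / l - 1" using xp assms by (simp add: ln_div)
  hence "l * (ln x - ln l) \<le> l * (x / l - 1)" using assms by (intro mult_left_mono) auto
  hence "l * ln x + (c - x) \<le> l * ln l + (c - l)" using assms by (simp add: algebra_simps)
  thus ?thesis using xp assms by (simp add: pe)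
qed

lemma monoL:
  fixes l u v c :: real
  assumes "l > 0" "0 \<le> u" "u \<le> v" "v \<le> l"
  shows "u powr l * exp (c - u) \<le> v powr l * exp (c - v)"
proof (cases "u = 0")
  case True thus ?thesis by (simp add: mult_nonneg_nonneg)
next
  case False
  hence up: "u > 0" using assms by simp
  hence vp: "v > 0" using assms by simp
  have "ln (u / v) \<le> u / v - 1" using up vp by (intro ln_le_minus_one) simp
  hence h: "ln u - ln v \<le> u / v - 1" using up vp by (simp add: ln_div)
  have "l * (1 - u / v) \<ge> v - u"
  proof -
    have "l * (1 - u / v) = (l / v) * (v - u)" using vp by (simp add: field_simps)
    moreover have "(l / v) * (v - u) \<ge> 1 * (v - u)"
      using assms vp by (intro mult_right_mono) auto
    ultimately show ?thesis by simp
  qed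
  moreover have "l * (ln v - ln u) \<ge> l * (1 - u / v)" using h assms by (intro mult_left_mono) auto
  ultimately have "l * ln u + (c - u) \<le> l * ln v + (c - v)" by (simp add: algebra_simps)
  thus ?thesis using up vp by (simp add: pe)
qed

lemma sol_nonneg: "x0 \<ge> 0 \<Longrightarrow> x1 \<ge> 0 \<Longrightarrow> sol lam a b x0 x1 n \<ge> 0"
proof (induction n rule: less_induct)
  case (less n)
  show ?case
  proof (cases n)
    case 0 thus ?thesis using less by simp
  next
    case (Suc m)
    show ?thesis
    proof (cases m)
      case 0 thus ?thesis using less Suc by simp
    next
      case (Suc k)
      thus ?thesis using \<open>n = Suc m\<close> by simp
    qed
  qed
qed

lemma sol_pos: "x0 > 0 \<Longrightarrow> x1 > 0 \<Longrightarrow> sol lam a b x0 x1 n > 0"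
proof (induction n rule: less_induct)
  case (less n)
  show ?case
  proof (cases n)
    case 0 thus ?thesis using less by simp
  next
    case (Suc m)
    show ?thesis
    proof (cases m)
      case 0 thus ?thesis using less Suc by simp
    next
      case (Suc k)
      have "sol lam a b x0 x1 k > 0" using less \<open>n = Suc m\<close> Suc by auto
      thus ?thesis using \<open>n = Suc m\<close> Suc by simp
    qed
  qed
qed

lemma sol_cont:
  assumes "x1 > 0"
  shows "continuous_on {0<..} (\<lambda>x. sol lam a b x x1 n)"
proof (induction n rule: less_induct)
  case (less n)
  show ?case
  proof (cases n)
    case 0 thus ?thesis by (simp add: continuous_on_id)
  next
    case (Suc m)
    show ?thesis
    proof (cases m)
      case 0 thus ?thesis using Suc by (simp add: continuous_on_const)
    next
      case (Suc k)
      have c1: "continuous_on {0<..} (\<lambda>x. sol lam a b x x1 k)" using less \<open>n = Suc m\<close> Suc by auto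
      have c2: "continuous_on {0<..} (\<lambda>x. sol lam a b x x1 (Suc k))" using less \<open>n = Suc m\<close> Suc by auto
      have p: "\<forall>x\<in>{0<..}. sol lam a b x x1 k \<noteq> 0" using sol_pos assms
        by (metis greaterThan_iff less_irrefl)
      show ?thesis using \<open>n = Suc m\<close> Suc
        by (simp, intro continuous_intros c1 c2 p)
    qed
  qed
qed

lemma nonconv:
  fixes f :: "nat \<Rightarrow> real"
  assumes "d > 0" "\<forall>N. \<exists>n\<ge>N. f n \<ge> d"
  shows "\<not> (f \<longlonglongrightarrow> 0)"
proof
  assume "f \<longlonglongrightarrow> 0"
  hence "eventually (\<lambda>n. f n < d) sequentially" using assms(1) by (rule order_tendstoD(2))
  then obtain N where "\<forall>n\<ge>N. f n < d" by (auto simp: eventually_sequentially)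
  thus False using assms(2) by (meson not_le)
qed

lemma sol_even: "sol lam a b x0 x1 (2 * Suc j) = sol lam a b x0 x1 (2*j) powr lam *
   exp (a - b * sol lam a b x0 x1 (Suc (2*j)) - sol lam a b x0 x1 (2*j))"
  by (simp add: numeral_2_eq_2)

lemma sol_odd: "sol lam a b x0 x1 (Suc (2 * Suc j)) = sol lam a b x0 x1 (Suc (2*j)) powr lam *
   exp (a - b * sol lam a b x0 x1 (2 * Suc j) - sol lam a b x0 x1 (Suc (2*j)))"
  by (simp add: numeral_2_eq_2)


definition Pr :: "real \<Rightarrow> real \<Rightarrow> real \<Rightarrow> real \<Rightarrow> bool" where
  "Pr lam xs u v \<longleftrightarrow> (xs \<le> u \<and> u \<le> lam \<and> 0 \<le> v \<and> v \<le> xs) \<or> (0 \<le> u \<and> u \<le> xs \<and> xs \<le> v \<and> v \<le> lam)"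

lemma aup:
  fixes lam a :: real
  assumes "lam > 1" "a \<le> lam - (lam - 1) * ln lam"
  shows "lam powr lam * exp (a - lam) \<le> lam"
proof -
  have "lam * ln lam + (a - lam) \<le> ln lam" using assms by (simp add: algebra_simps)
  hence "exp (lam * ln lam + (a - lam)) \<le> exp (ln lam)" by simp
  thus ?thesis using assms by (simp add: pe)
qed

lemma inv_step:
  fixes lam a b xs u v :: real
  assumes l1: "lam > 1" and bp: "b > 0" and xsp: "xs > 0"
    and fp: "xs = xs powr lam * exp (a - (b + 1) * xs)"
    and au: "lam powr lam * exp (a - lam) \<le> lam"
    and P: "Pr lam xs u v"
  shows "Pr lam xs v (u powr lam * exp (a - b * v - u))"
proof -
  have fp': "xs = xs powr lam * exp ((a - b * xs) - xs)" using fp by (simp add: algebra_simps)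
  from P show ?thesis unfolding Pr_def
  proof
    assume h: "xs \<le> u \<and> u \<le> lam \<and> 0 \<le> v \<and> v \<le> xs"
    have "xs \<le> xs powr lam * exp ((a - b * v) - xs)"
    proof -
      have "exp ((a - b * xs) - xs) \<le> exp ((a - b * v) - xs)" using h bp
        by (simp add: mult_left_mono)
      hence "xs powr lam * exp ((a - b * xs) - xs) \<le> xs powr lam * exp ((a - b * v) - xs)"
        by (intro mult_left_mono) auto
      thus ?thesis using fp' by simp
    qed
    also have "\<dots> \<le> u powr lam * exp ((a - b * v) - u)"
      using h l1 xsp by (intro monoL) auto
    finally have w1: "xs \<le> u powr lam * exp (a - b * v - u)" by simp
    have "u powr lam * exp (a - b * v - u) \<le> u powr lam * exp (a - u)"
      using h bp by (intro mult_left_mono) auto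
    also have "\<dots> \<le> lam powr lam * exp (a - lam)" using h l1 xsp by (intro I1) auto
    finally have w2: "u powr lam * exp (a - b * v - u) \<le> lam" using au by simp
    show "(xs \<le> v \<and> v \<le> lam \<and> 0 \<le> u powr lam * exp (a - b * v - u) \<and> u powr lam * exp (a - b * v - u) \<le> xs) \<or>
    (0 \<le> v \<and> v \<le> xs \<and> xs \<le> u powr lam * exp (a - b * v - u) \<and> u powr lam * exp (a - b * v - u) \<le> lam)"
      using h w1 w2 by auto
  next
    assume h: "0 \<le> u \<and> u \<le> xs \<and> xs \<le> v \<and> v \<le> lam"
    have "u powr lam * exp (a - b * v - u) \<le> u powr lam * exp ((a - b * xs) - u)"
      using h bp by (intro mult_left_mono) (auto simp: mult_left_mono)
    also have "\<dots> \<le> xs powr lam * exp ((a - b * xs) - xs)"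
      using h l1 by (intro monoL) auto
    finally have w1: "u powr lam * exp (a - b * v - u) \<le> xs" using fp' by simp
    have w0: "0 \<le> u powr lam * exp (a - b * v - u)" by simp
    show "(xs \<le> v \<and> v \<le> lam \<and> 0 \<le> u powr lam * exp (a - b * v - u) \<and> u powr lam * exp (a - b * v - u) \<le> xs) \<or>
    (0 \<le> v \<and> v \<le> xs \<and> xs \<le> u powr lam * exp (a - b * v - u) \<and> u powr lam * exp (a - b * v - u) \<le> lam)"
      using h w0 w1 by auto
  qed
qed

lemma inv_nonconv:
  fixes lam a b xs :: real
  assumes l1: "lam > 1" and bp: "b > 0" and xsp: "xs > 0"
    and fp: "xs = xs powr lam * exp (a - (b + 1) * xs)"
    and au: "lam powr lam * exp (a - lam) \<le> lam"
    and P: "Pr lam xs (sol lam a b x0 x1 m) (sol lam a b x0 x1 (Suc m))"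
  shows "\<not> (sol lam a b x0 x1 \<longlonglongrightarrow> 0)"
proof -
  have all: "\<forall>n\<ge>m. Pr lam xs (sol lam a b x0 x1 n) (sol lam a b x0 x1 (Suc n))"
  proof (intro allI impI)
    fix n assume "m \<le> n"
    thus "Pr lam xs (sol lam a b x0 x1 n) (sol lam a b x0 x1 (Suc n))"
    proof (induction n rule: dec_induct)
      case base thus ?case using P .
    next
      case (step n)
      show ?case using inv_step[OF l1 bp xsp fp au step.IH] by simp
    qed
  qed
  show ?thesis
  proof (rule nonconv[OF xsp], intro allI)
    fix N
    have "Pr lam xs (sol lam a b x0 x1 (max N m)) (sol lam a b x0 x1 (Suc (max N m)))"
      using all by simp
    hence "xs \<le> sol lam a b x0 x1 (max N m) \<or> xs \<le> sol lam a b x0 x1 (Suc (max N m))"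
      unfolding Pr_def by auto
    thus "\<exists>n\<ge>N. xs \<le> sol lam a b x0 x1 n" by (meson le_SucI max.cobounded1)
  qed
qed


lemma Aconv:
  fixes lam a b x0 x1 :: real
  assumes l1: "lam > 1" and bp: "b > 0" and aT: "a < (lam - 1) * (1 - ln (lam - 1))"
    and x0: "x0 \<ge> 0" and x1: "x1 \<ge> 0"
  shows "sol lam a b x0 x1 \<longlonglongrightarrow> 0"
proof -
  define T where "T = (lam - 1) * (1 - ln (lam - 1))"
  define c where "c = exp (a - T)"
  have c1: "c < 1" "c > 0" using aT by (auto simp: c_def T_def)
  have step: "x powr lam * exp (a - b * y - x) \<le> c * x" if "x \<ge> 0" "y \<ge> 0" for x y
  proof (cases "x = 0")
    case True thus ?thesis by simp
  next
    case False
    hence xp: "x > 0" using that by simp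
    have "x powr lam * exp (a - b * y - x) \<le> x powr lam * exp (a - x)"
      using that bp by (intro mult_left_mono) auto
    also have "\<dots> = exp (lam * ln x + (a - x))" using xp by (simp add: pe)
    also have "\<dots> \<le> exp (ln x + (a - T))"
    proof -
      have "ln (x / (lam - 1)) \<le> x / (lam - 1) - 1" using xp l1 by (intro ln_le_minus_one) simp
      hence "ln x - ln (lam - 1) \<le> x / (lam - 1) - 1" using xp l1 by (simp add: ln_div)
      hence "(lam - 1) * (ln x - ln (lam - 1)) \<le> (lam - 1) * (x / (lam - 1) - 1)"
        using l1 by (intro mult_left_mono) auto
      also have "(lam - 1) * (x / (lam - 1) - 1) = x - (lam - 1)" using l1 by (simp add: field_simps)
      finally have h2: "lam * ln x - ln x - lam * ln (lam - 1) + ln (lam - 1) \<le> x - lam + 1"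
        by (simp add: algebra_simps)
      have "T = lam - 1 - lam * ln (lam - 1) + ln (lam - 1)" by (simp add: T_def algebra_simps)
      hence "lam * ln x + (a - x) \<le> ln x + (a - T)" using h2 by linarith
      thus ?thesis by simp
    qed
    also have "\<dots> = c * x" using xp by (simp add: c_def exp_add)
    finally show ?thesis .
  qed
  define r where "r = sqrt c"
  have r: "r > 0" "r < 1" "r^2 = c" using c1 by (auto simp: r_def)
  define K where "K = (x0 + x1) / r"
  have K2: "r * K = x0 + x1" using r by (simp add: K_def)
  have "r * (x0 + x1) \<le> x0 + x1" using r x0 x1 by (intro mult_left_le_one_le) auto
  hence "x0 + x1 \<le> K" using r by (simp add: K_def le_divide_eq mult.commute)
  note K = this K2
  have nn: "\<And>n. sol lam a b x0 x1 n \<ge> 0" using sol_nonneg x0 x1 by blast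
  have bound: "sol lam a b x0 x1 n \<le> r ^ n * K" for n
  proof (induction n rule: less_induct)
    case (less n)
    show ?case
    proof (cases n)
      case 0 thus ?thesis using K x1 by simp
    next
      case (Suc m)
      show ?thesis
      proof (cases m)
        case 0 thus ?thesis using K x0 Suc by simp
      next
        case (Suc k)
        have "sol lam a b x0 x1 n = sol lam a b x0 x1 k powr lam * exp (a - b * sol lam a b x0 x1 (Suc k) - sol lam a b x0 x1 k)"
          using \<open>n = Suc m\<close> Suc by simp
        also have "\<dots> \<le> c * sol lam a b x0 x1 k" using step nn by blast
        also have "\<dots> \<le> c * (r ^ k * K)" using less \<open>n = Suc m\<close> Suc c1
          by (intro mult_left_mono) auto
        also have "\<dots> = r ^ n * K" using \<open>n = Suc m\<close> Suc r by (simp add: power2_eq_square)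
        finally show ?thesis .
      qed
    qed
  qed
  have lim: "(\<lambda>n. r ^ n * K) \<longlonglongrightarrow> 0" using r
    by (intro tendsto_mult_left_zero LIMSEQ_power_zero) simp
  show ?thesis
    by (rule tendsto_sandwich[of "\<lambda>n. 0" _ _ "\<lambda>n. r ^ n * K"])
       (use nn bound lim in auto)
qed

lemma const_sol:
  fixes lam a b :: real
  assumes l1: "lam > 1" and aT: "a = (lam - 1) * (1 - ln (lam - 1))"
  shows "\<not> (sol lam a b (lam - 1) 0 \<longlonglongrightarrow> 0)"
proof -
  have key: "(lam - 1) powr lam * exp (a - b * 0 - (lam - 1)) = lam - 1"
  proof -
    have "(lam - 1) powr lam * exp (a - b * 0 - (lam - 1)) = exp (lam * ln (lam - 1) + (a - (lam - 1)))"
      using l1 by (simp add: pe)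
    also have "lam * ln (lam - 1) + (a - (lam - 1)) = ln (lam - 1)" using aT
      by (simp add: algebra_simps)
    finally show ?thesis using l1 by simp
  qed
  have "sol lam a b (lam - 1) 0 (2 * k) = lam - 1 \<and> sol lam a b (lam - 1) 0 (Suc (2 * k)) = 0" for k
  proof (induction k)
    case 0 thus ?case by simp
  next
    case (Suc k)
    thus ?case using key l1 by (simp only: sol_even sol_odd) simp
  qed
  hence ev: "\<And>k. sol lam a b (lam - 1) 0 (2 * k) = lam - 1" by blast
  show ?thesis
  proof (rule nonconv[of "lam - 1"])
    show "lam - 1 > 0" using l1 by simp
    show "\<forall>N. \<exists>n\<ge>N. lam - 1 \<le> sol lam a b (lam - 1) 0 n"
    proof
      fix N show "\<exists>n\<ge>N. lam - 1 \<le> sol lam a b (lam - 1) 0 n"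
        by (rule exI[of _ "2 * N"]) (simp add: ev)
    qed
  qed
qed

lemma no_fp:
  fixes lam a b x :: real
  assumes l1: "lam > 1" and bp: "b > 0"
    and au: "a < (lam - 1) * (1 - ln (lam - 1) + ln (b + 1))"
    and xp: "x > 0" and fx: "x = x powr lam * exp (a - (b + 1) * x)"
  shows False
proof -
  have "x = exp (lam * ln x + (a - (b + 1) * x))" using fx xp by (simp add: pe)
  hence "ln x = lam * ln x + (a - (b + 1) * x)" by (metis ln_exp)
  hence e: "(lam - 1) * ln x + a - (b + 1) * x = 0" by (simp add: algebra_simps)
  have "ln (x * (b + 1) / (lam - 1)) \<le> x * (b + 1) / (lam - 1) - 1"
    using xp l1 bp by (intro ln_le_minus_one) simp
  hence "ln x + ln (b + 1) - ln (lam - 1) \<le> x * (b + 1) / (lam - 1) - 1"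
    using xp l1 bp by (simp add: ln_div ln_mult)
  hence "(lam - 1) * (ln x + ln (b + 1) - ln (lam - 1)) \<le> (lam - 1) * (x * (b + 1) / (lam - 1) - 1)"
    using l1 by (intro mult_left_mono) auto
  also have "(lam - 1) * (x * (b + 1) / (lam - 1) - 1) = x * (b + 1) - (lam - 1)"
    using l1 by (simp add: field_simps)
  finally have h2: "lam * ln x - ln x + lam * ln (b + 1) - ln (b + 1) - lam * ln (lam - 1) + ln (lam - 1)
     \<le> x * b + x - lam + 1" by (simp add: algebra_simps)
  have e2: "lam * ln x - ln x + a - b * x - x = 0" using e by (simp add: algebra_simps)
  have au2: "a < lam - 1 - lam * ln (lam - 1) + ln (lam - 1) + lam * ln (b + 1) - ln (b + 1)"
    using au by (simp add: algebra_simps)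
  show False using h2 e2 au2 by (simp add: algebra_simps)
qed


lemma Bexist:
  fixes lam a b :: real
  assumes l1: "lam > 1" and bp: "b > 0" and aT: "(lam - 1) * (1 - ln (lam - 1)) < a"
  shows "\<exists>x0 x1. (\<forall>n. sol lam a b x0 x1 n > 0) \<and> \<not> (sol lam a b x0 x1 \<longlonglongrightarrow> 0)"
proof -
  define T where "T = (lam - 1) * (1 - ln (lam - 1))"
  define \<epsilon> where "\<epsilon> = min ((a - T) / (2 * b)) (exp (- a / (lam - 1)))"
  define \<alpha> where "\<alpha> = min ((lam - 1) / 2) (exp (- (\<bar>a\<bar> + 1) / (lam - 1)))"
  define \<beta> where "\<beta> = lam - 1"
  have ep: "\<epsilon> > 0" using aT bp by (simp add: \<epsilon>_def T_def)
  have ap: "\<alpha> > 0" using l1 by (simp add: \<alpha>_def)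
  have "\<alpha> \<le> (lam - 1) / 2" unfolding \<alpha>_def by (rule min.cobounded1)
  hence ab: "\<alpha> < \<beta>" using l1 by (simp add: \<beta>_def)
  have bpos: "\<beta> > 0" using l1 by (simp add: \<beta>_def)
  have eps_b: "b * \<epsilon> < a - T"
  proof -
    have "\<epsilon> \<le> (a - T) / (2 * b)" by (simp add: \<epsilon>_def)
    hence "b * \<epsilon> \<le> b * ((a - T) / (2 * b))" using bp by (intro mult_left_mono) auto
    also have "\<dots> = (a - T) / 2" using bp by simp
    finally show ?thesis using aT by (simp add: T_def)
  qed
  have ln_eps: "(lam - 1) * ln \<epsilon> \<le> - a"
  proof -
    have "ln \<epsilon> \<le> ln (exp (- a / (lam - 1)))" using ep by (subst ln_le_cancel_iff) (auto simp: \<epsilon>_def)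
    hence "ln \<epsilon> \<le> - a / (lam - 1)" by simp
    hence "(lam - 1) * ln \<epsilon> \<le> (lam - 1) * (- a / (lam - 1))" using l1 by (intro mult_left_mono) auto
    thus ?thesis using l1 by simp
  qed
  have ln_al: "(lam - 1) * ln \<alpha> \<le> - (\<bar>a\<bar> + 1)"
  proof -
    have "ln \<alpha> \<le> ln (exp (- (\<bar>a\<bar> + 1) / (lam - 1)))" using ap by (subst ln_le_cancel_iff) (auto simp: \<alpha>_def)
    hence "ln \<alpha> \<le> - (\<bar>a\<bar> + 1) / (lam - 1)" by simp
    hence "(lam - 1) * ln \<alpha> \<le> (lam - 1) * (- (\<bar>a\<bar> + 1) / (lam - 1))" using l1 by (intro mult_left_mono) auto
    thus ?thesis using l1 by simp
  qed
  have odd_step: "w2 \<le> \<epsilon>" if "0 < w" "w \<le> \<epsilon>" "0 \<le> e" "w2 = w powr lam * exp (a - b * e - w)" for w e w2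
  proof -
    have "w2 = w powr lam * exp (a - b * e - w)" using that by simp
    also have "\<dots> \<le> w powr lam * exp a"
    proof -
      have "0 \<le> b * e" using that bp by simp
      thus ?thesis using that by (intro mult_left_mono) auto
    qed
    also have "\<dots> = exp (lam * ln w + a)" using that by (simp add: pe)
    also have "\<dots> \<le> exp (ln w)"
    proof -
      have "ln w \<le> ln \<epsilon>" using that by simp
      hence "(lam - 1) * ln w \<le> (lam - 1) * ln \<epsilon>" using l1 by (intro mult_left_mono) auto
      hence "lam * ln w + a \<le> ln w" using ln_eps by (simp add: algebra_simps)
      thus ?thesis by simp
    qed
    also have "\<dots> = w" using that by simp
    finally show ?thesis using that by simp
  qed
  have odd_bound: "sol lam a b x \<epsilon> (Suc (2 * j)) \<le> \<epsilon>" if "x > 0" for x j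
  proof (induction j)
    case 0 thus ?case by simp
  next
    case (Suc j)
    show ?case
      by (rule odd_step[OF sol_pos[OF that ep] Suc.IH less_imp_le[OF sol_pos[OF that ep]] sol_odd])
  qed
  have al_step: "\<alpha> powr lam * exp (a - b * w - \<alpha>) < \<alpha>" if "0 \<le> w" for w
  proof -
    have "\<alpha> powr lam * exp (a - b * w - \<alpha>) \<le> \<alpha> powr lam * exp (a - \<alpha>)"
      using that bp by (intro mult_left_mono) auto
    also have "\<dots> = exp (lam * ln \<alpha> + (a - \<alpha>))" using ap by (simp add: pe)
    also have "\<dots> < exp (ln \<alpha>)"
    proof -
      have "lam * ln \<alpha> + (a - \<alpha>) < ln \<alpha>" using ln_al ap by (simp add: algebra_simps)
      thus ?thesis by simp
    qed
    also have "\<dots> = \<alpha>" using ap by simp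
    finally show ?thesis .
  qed
  have be_step: "\<beta> powr lam * exp (a - b * w - \<beta>) > \<beta>" if "0 \<le> w" "w \<le> \<epsilon>" for w
  proof -
    have "b * w \<le> b * \<epsilon>" using that bp by (intro mult_left_mono) auto
    hence h: "b * w < a - T" using eps_b by simp
    have "T = lam - 1 - lam * ln (lam - 1) + ln (lam - 1)" by (simp add: T_def algebra_simps)
    hence "ln \<beta> < lam * ln \<beta> + (a - b * w - \<beta>)" using h by (simp add: \<beta>_def algebra_simps)
    hence "exp (ln \<beta>) < exp (lam * ln \<beta> + (a - b * w - \<beta>))" by simp
    thus ?thesis using bpos by (simp add: pe)
  qed
  define e where "e = (\<lambda>x k. sol lam a b x \<epsilon> (2 * k))"
  have e_suc: "e x (Suc k) = e x k powr lam * exp (a - b * sol lam a b x \<epsilon> (Suc (2 * k)) - e x k)" for x k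
    by (simp add: e_def sol_even)
  have e_cont: "continuous_on {0<..} (\<lambda>x. e x k)" for k
    unfolding e_def by (rule sol_cont[OF ep])
  have e_open: "open ((\<lambda>x. e x k) -` B \<inter> {0<..})" if "open B" for k B
    using e_cont[of k] that by (simp add: continuous_on_open_vimage)
  define Dk where "Dk = (\<lambda>k. {x. 0 < x \<and> (\<forall>j<k. e x j < \<beta>) \<and> e x k < \<alpha>})"
  define Uk where "Uk = (\<lambda>k. {x. 0 < x \<and> (\<forall>j<k. e x j > \<alpha>) \<and> e x k > \<beta>})"
  have Dk_eq: "Dk k = {0<..} \<inter> (\<Inter>j\<in>{..<k}. (\<lambda>x. e x j) -` {..<\<beta>} \<inter> {0<..}) \<inter> ((\<lambda>x. e x k) -` {..<\<alpha>} \<inter> {0<..})" for k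
    by (auto simp: Dk_def)
  have Uk_eq: "Uk k = {0<..} \<inter> (\<Inter>j\<in>{..<k}. (\<lambda>x. e x j) -` {\<alpha><..} \<inter> {0<..}) \<inter> ((\<lambda>x. e x k) -` {\<beta><..} \<inter> {0<..})" for k
    by (auto simp: Uk_def)
  have oD: "open (\<Union>k. Dk k)"
    unfolding Dk_eq by (intro open_UN ballI open_Int open_INT finite_lessThan e_open) auto
  have oU: "open (\<Union>k. Uk k)"
    unfolding Uk_eq by (intro open_UN ballI open_Int open_INT finite_lessThan e_open) auto
  have disj: "(\<Union>k. Dk k) \<inter> (\<Union>k. Uk k) \<inter> {\<alpha>..\<beta>} = {}"
  proof (rule ccontr)
    assume "(\<Union>k. Dk k) \<inter> (\<Union>k. Uk k) \<inter> {\<alpha>..\<beta>} \<noteq> {}"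
    then obtain x k1 k2 where x1: "x \<in> Dk k1" and x2: "x \<in> Uk k2" by blast
    show False
    proof (cases k1 k2 rule: linorder_cases)
      case less thus False using x1 x2 by (auto simp: Dk_def Uk_def)
    next
      case equal thus False using x1 x2 ab by (auto simp: Dk_def Uk_def)
    next
      case greater thus False using x1 x2 by (auto simp: Dk_def Uk_def)
    qed
  qed
  have o1: "sol lam a b y \<epsilon> (Suc 0) = \<epsilon>" for y by simp
  have aD: "\<alpha> \<in> Dk 1"
  proof -
    have "e \<alpha> (Suc 0) < \<alpha>" using al_step[of \<epsilon>] ep by (simp add: e_suc) (simp add: e_def)
    thus ?thesis using ap ab by (simp add: Dk_def e_def)
  qed
  have bU: "\<beta> \<in> Uk 1"
  proof -
    have "e \<beta> (Suc 0) > \<beta>" using be_step[of \<epsilon>] ep by (simp add: e_suc) (simp add: e_def)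
    thus ?thesis using bpos ab by (simp add: Uk_def e_def)
  qed
  have "\<not> {\<alpha>..\<beta>} \<subseteq> (\<Union>k. Dk k) \<union> (\<Union>k. Uk k)"
  proof
    assume sub: "{\<alpha>..\<beta>} \<subseteq> (\<Union>k. Dk k) \<union> (\<Union>k. Uk k)"
    have "(\<Union>k. Dk k) \<inter> {\<alpha>..\<beta>} = {} \<or> (\<Union>k. Uk k) \<inter> {\<alpha>..\<beta>} = {}"
      by (rule connectedD[OF connected_Icc oD oU disj sub])
    moreover have "\<alpha> \<in> (\<Union>k. Dk k) \<inter> {\<alpha>..\<beta>}" using aD ab by auto
    moreover have "\<beta> \<in> (\<Union>k. Uk k) \<inter> {\<alpha>..\<beta>}" using bU ab by auto
    ultimately show False by blast
  qed
  then obtain x where xI: "x \<in> {\<alpha>..\<beta>}" and xn: "x \<notin> (\<Union>k. Dk k) \<union> (\<Union>k. Uk k)"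
    unfolding subset_iff by blast
  have xD: "x \<notin> Dk k" for k using xn by (simp only: Un_iff UN_iff) blast
  have xU: "x \<notin> Uk k" for k using xn by (simp only: Un_iff UN_iff) blast
  have xp: "x > 0" using xI ap by simp
  have ob: "0 \<le> sol lam a b x \<epsilon> (Suc (2 * k)) \<and> sol lam a b x \<epsilon> (Suc (2 * k)) \<le> \<epsilon>" for k
    using sol_pos[OF xp ep, of lam a b] odd_bound[OF xp] by (simp add: less_imp_le)
  have inJ: "\<alpha> \<le> e x k \<and> e x k \<le> \<beta>" for k
  proof (induction k rule: less_induct)
    case (less k)
    show ?case
    proof (cases k)
      case 0 thus ?thesis using xI by (simp add: e_def)
    next
      case (Suc m)
      have IHm: "\<alpha> \<le> e x m \<and> e x m \<le> \<beta>" using less Suc by simp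
      show ?thesis
      proof (rule conjI; rule ccontr)
        assume "\<not> \<alpha> \<le> e x k"
        hence lt: "e x k < \<alpha>" by simp
        have "\<not> (\<forall>j<k. e x j < \<beta>)" using xD[of k] xp lt by (auto simp: Dk_def)
        then obtain j where j: "j < k" "e x j \<ge> \<beta>" by auto
        have "\<alpha> \<le> e x j \<and> e x j \<le> \<beta>" using less.IH j(1) by blast
        hence ej: "e x j = \<beta>" using j(2) by linarith
        have es: "e x (Suc j) > \<beta>" using ej be_step ob[of j] by (simp add: e_suc)
        show False
        proof (cases "Suc j < k")
          case True
          hence "e x (Suc j) \<le> \<beta>" using less.IH by blast
          thus False using es by linarith
        next
          case False
          hence "Suc j = k" using j by linarith
          thus False using es lt ab by auto
        qed
      next
        assume "\<not> e x k \<le> \<beta>"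
        hence gt: "e x k > \<beta>" by simp
        have "\<not> (\<forall>j<k. e x j > \<alpha>)" using xU[of k] xp gt by (auto simp: Uk_def)
        then obtain j where j: "j < k" "e x j \<le> \<alpha>" by auto
        have "\<alpha> \<le> e x j \<and> e x j \<le> \<beta>" using less.IH j(1) by blast
        hence ej: "e x j = \<alpha>" using j(2) by linarith
        have es: "e x (Suc j) < \<alpha>" using ej al_step ob[of j] by (simp add: e_suc)
        show False
        proof (cases "Suc j < k")
          case True
          hence "\<alpha> \<le> e x (Suc j)" using less.IH by blast
          thus False using es by linarith
        next
          case False
          hence "Suc j = k" using j by linarith
          thus False using es gt ab by auto
        qed
      qed
    qed
  qed
  have "\<not> (sol lam a b x \<epsilon> \<longlonglongrightarrow> 0)"
  proof (rule nonconv[OF ap], intro allI)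
    fix N show "\<exists>n\<ge>N. \<alpha> \<le> sol lam a b x \<epsilon> n"
      using inJ[of N] by (intro exI[of _ "2 * N"]) (simp add: e_def)
  qed
  moreover have "\<forall>n. sol lam a b x \<epsilon> n > 0" using sol_pos[OF xp ep] by blast
  ultimately show ?thesis by blast
qed


lemma part_c:
  fixes lam a b xs :: real
  assumes l1: "lam > 1" and bp: "b > 0" and xsp: "xs > 0"
    and fp: "xs = xs powr lam * exp (a - (b + 1) * xs)"
    and au: "lam powr lam * exp (a - lam) \<le> lam"
  shows "\<exists>x0 x1. x0 \<in> {0<..<xs} \<and> x1 \<in> {0<..<xs}
               \<and> (\<forall>n. sol lam a b x0 x1 n > 0) \<and> \<not> (sol lam a b x0 x1 \<longlonglongrightarrow> 0)"
proof -
  define x1 where "x1 = xs / 2"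
  have x1p: "x1 > 0" "x1 < xs" using xsp by (auto simp: x1_def)
  define \<phi> where "\<phi> = (\<lambda>t. t powr lam * exp (a - b * x1 - t))"
  have lim: "(\<phi> \<longlongrightarrow> \<phi> xs) (at_left xs)" unfolding \<phi>_def
    by (intro tendsto_intros) (use xsp in auto)
  have "\<phi> xs = xs powr lam * exp (a - (b + 1) * xs) * exp (b * x1)"
    unfolding \<phi>_def by (simp add: mult.assoc exp_add[symmetric] algebra_simps x1_def)
  also have "\<dots> = xs * exp (b * x1)" using fp by simp
  also have "\<dots> > xs" using xsp bp x1p by simp
  finally have "\<phi> xs > xs" .
  hence ev1: "eventually (\<lambda>t. \<phi> t > xs) (at_left xs)" using lim by (rule order_tendstoD(1)[rotated])
  have ev2: "eventually (\<lambda>t. t \<in> {0<..<xs}) (at_left xs)" using xsp by (rule eventually_at_left_real)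
  have nb: "at_left xs \<noteq> bot" using trivial_limit_at_left_real[of xs] unfolding trivial_limit_def .
  obtain t where t: "\<phi> t > xs" "t \<in> {0<..<xs}"
    using eventually_happens'[OF nb eventually_conj[OF ev1 ev2]] by blast
  have s1: "sol lam a b t x1 (Suc 0) = x1" by simp
  have s2: "sol lam a b t x1 (Suc (Suc 0)) = \<phi> t" by (simp add: \<phi>_def)
  have "\<phi> t \<le> t powr lam * exp (a - t)" unfolding \<phi>_def using bp x1p by (intro mult_left_mono) auto
  also have "\<dots> \<le> lam powr lam * exp (a - lam)" using t l1 by (intro I1) auto
  finally have "\<phi> t \<le> lam" using au by simp
  hence P: "Pr lam xs (sol lam a b t x1 (Suc 0)) (sol lam a b t x1 (Suc (Suc 0)))"
    unfolding s1 s2 Pr_def using t x1p by auto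
  have "\<not> (sol lam a b t x1 \<longlonglongrightarrow> 0)" by (rule inv_nonconv[OF l1 bp xsp fp au P])
  moreover have "\<forall>n. sol lam a b t x1 n > 0" using sol_pos t x1p by auto
  ultimately show ?thesis using t x1p by (intro exI[of _ t] exI[of _ x1]) simp
qed

theorem mainTheorem10:
  fixes lam a b :: real
  assumes "lam > 1" and "b > 0"
  shows
  "((\<forall>x0 x1. x0 \<ge> 0 \<longrightarrow> x1 \<ge> 0 \<longrightarrow> sol lam a b x0 x1 \<longlonglongrightarrow> 0)
      \<longleftrightarrow> a < (lam - 1) * (1 - ln (lam - 1)))
   \<and> ((lam - 1) * (1 - ln (lam - 1)) < a \<and> a < (lam - 1) * (1 - ln (lam - 1) + ln (b + 1))
      \<longrightarrow> (\<not> (\<exists>x. fixed_pt lam a b x))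
          \<and> (\<exists>x0 x1. (\<forall>n. sol lam a b x0 x1 n > 0) \<and> \<not> (sol lam a b x0 x1 \<longlonglongrightarrow> 0)))
   \<and> (\<forall>xs. b \<le> (lam - 1) / lam * exp (1 / (lam - 1)) - 1
          \<and> (lam - 1) * (1 - ln (lam - 1) + ln (b + 1)) \<le> a
          \<and> a \<le> lam - (lam - 1) * ln lam
          \<and> fixed_pt lam a b xs \<and> (\<forall>y. fixed_pt lam a b y \<longrightarrow> xs \<le> y)
      \<longrightarrow> (\<exists>x0 x1. x0 \<in> {0<..<xs} \<and> x1 \<in> {0<..<xs}
               \<and> (\<forall>n. sol lam a b x0 x1 n > 0) \<and> \<not> (sol lam a b x0 x1 \<longlonglongrightarrow> 0))
        \<and> (\<forall>x0 x1. (x0, x1) \<in> ({xs..lam} \<times> {0..xs}) \<union> ({0..xs} \<times> {xs..lam})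
               \<longrightarrow> \<not> (sol lam a b x0 x1 \<longlonglongrightarrow> 0)))"
proof -
  note l1 = assms(1) and bp = assms(2)
  have pa: "(\<forall>x0 x1. x0 \<ge> 0 \<longrightarrow> x1 \<ge> 0 \<longrightarrow> sol lam a b x0 x1 \<longlonglongrightarrow> 0)
      \<longleftrightarrow> a < (lam - 1) * (1 - ln (lam - 1))"
  proof
    assume H: "\<forall>x0 x1. x0 \<ge> 0 \<longrightarrow> x1 \<ge> 0 \<longrightarrow> sol lam a b x0 x1 \<longlonglongrightarrow> 0"
    show "a < (lam - 1) * (1 - ln (lam - 1))"
    proof (rule ccontr)
      assume "\<not> a < (lam - 1) * (1 - ln (lam - 1))"
      hence "a = (lam - 1) * (1 - ln (lam - 1)) \<or> (lam - 1) * (1 - ln (lam - 1)) < a" by auto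
      thus False
      proof
        assume "a = (lam - 1) * (1 - ln (lam - 1))"
        hence "\<not> (sol lam a b (lam - 1) 0 \<longlonglongrightarrow> 0)" using l1 by (intro const_sol)
        thus False using H l1 by auto
      next
        assume "(lam - 1) * (1 - ln (lam - 1)) < a"
        then obtain x0 x1 where "\<forall>n. sol lam a b x0 x1 n > 0" "\<not> (sol lam a b x0 x1 \<longlonglongrightarrow> 0)"
          using Bexist[OF l1 bp] by blast
        moreover have "x0 > 0" "x1 > 0" using calculation(1)[rule_format, of 0]
          calculation(1)[rule_format, of "Suc 0"] by auto
        ultimately show False using H by auto
      qed
    qed
  next
    assume "a < (lam - 1) * (1 - ln (lam - 1))"
    thus "\<forall>x0 x1. x0 \<ge> 0 \<longrightarrow> x1 \<ge> 0 \<longrightarrow> sol lam a b x0 x1 \<longlonglongrightarrow> 0"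
      using Aconv[OF l1 bp] by blast
  qed
  have pb: "(lam - 1) * (1 - ln (lam - 1)) < a \<and> a < (lam - 1) * (1 - ln (lam - 1) + ln (b + 1))
      \<longrightarrow> (\<not> (\<exists>x. fixed_pt lam a b x))
          \<and> (\<exists>x0 x1. (\<forall>n. sol lam a b x0 x1 n > 0) \<and> \<not> (sol lam a b x0 x1 \<longlonglongrightarrow> 0))"
    using no_fp[OF l1 bp] Bexist[OF l1 bp] unfolding fixed_pt_def by blast
  have pc: "\<forall>xs. b \<le> (lam - 1) / lam * exp (1 / (lam - 1)) - 1
          \<and> (lam - 1) * (1 - ln (lam - 1) + ln (b + 1)) \<le> a
          \<and> a \<le> lam - (lam - 1) * ln lam
          \<and> fixed_pt lam a b xs \<and> (\<forall>y. fixed_pt lam a b y \<longrightarrow> xs \<le> y)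
      \<longrightarrow> (\<exists>x0 x1. x0 \<in> {0<..<xs} \<and> x1 \<in> {0<..<xs}
               \<and> (\<forall>n. sol lam a b x0 x1 n > 0) \<and> \<not> (sol lam a b x0 x1 \<longlonglongrightarrow> 0))
        \<and> (\<forall>x0 x1. (x0, x1) \<in> ({xs..lam} \<times> {0..xs}) \<union> ({0..xs} \<times> {xs..lam})
               \<longrightarrow> \<not> (sol lam a b x0 x1 \<longlonglongrightarrow> 0))"
  proof (intro allI impI)
    fix xs
    assume H: "b \<le> (lam - 1) / lam * exp (1 / (lam - 1)) - 1
          \<and> (lam - 1) * (1 - ln (lam - 1) + ln (b + 1)) \<le> a
          \<and> a \<le> lam - (lam - 1) * ln lam
          \<and> fixed_pt lam a b xs \<and> (\<forall>y. fixed_pt lam a b y \<longrightarrow> xs \<le> y)"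
    have xsp: "xs > 0" and fp: "xs = xs powr lam * exp (a - (b + 1) * xs)"
      using H unfolding fixed_pt_def by auto
    have au: "lam powr lam * exp (a - lam) \<le> lam" using H l1 by (intro aup) auto
    show "(\<exists>x0 x1. x0 \<in> {0<..<xs} \<and> x1 \<in> {0<..<xs}
               \<and> (\<forall>n. sol lam a b x0 x1 n > 0) \<and> \<not> (sol lam a b x0 x1 \<longlonglongrightarrow> 0))
        \<and> (\<forall>x0 x1. (x0, x1) \<in> ({xs..lam} \<times> {0..xs}) \<union> ({0..xs} \<times> {xs..lam})
               \<longrightarrow> \<not> (sol lam a b x0 x1 \<longlonglongrightarrow> 0))"
    proof
      show "\<exists>x0 x1. x0 \<in> {0<..<xs} \<and> x1 \<in> {0<..<xs}
               \<and> (\<forall>n. sol lam a b x0 x1 n > 0) \<and> \<not> (sol lam a b x0 x1 \<longlonglongrightarrow> 0)"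
        by (rule part_c[OF l1 bp xsp fp au])
    next
      show "\<forall>x0 x1. (x0, x1) \<in> ({xs..lam} \<times> {0..xs}) \<union> ({0..xs} \<times> {xs..lam})
               \<longrightarrow> \<not> (sol lam a b x0 x1 \<longlonglongrightarrow> 0)"
      proof (intro allI impI)
        fix x0 x1
        assume "(x0, x1) \<in> ({xs..lam} \<times> {0..xs}) \<union> ({0..xs} \<times> {xs..lam})"
        hence P: "Pr lam xs (sol lam a b x0 x1 0) (sol lam a b x0 x1 (Suc 0))"
          unfolding Pr_def by auto
        show "\<not> (sol lam a b x0 x1 \<longlonglongrightarrow> 0)" by (rule inv_nonconv[OF l1 bp xsp fp au P])
      qed
    qed
  qed
  show ?thesis using pa pb pc by blast
qed


end
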